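(* Let $0<\alpha_1\le\dots\le\alpha_r$ and $\Lambda=\Lambda(\alpha_1,\dots,\alpha_r)$. Then: (1) $w(\Lambda)=\alpha_r$; (2) $\Lambda$ equals the downwards closure of the convex hull of all coordinate permutations of the vector $(\alpha_1,\dots,\alpha_r)$; (3) for every $j\in[r]$, the slice $\{\mathbf x_{-j}:\mathbf x\in\Lambda,\ x_j=\alpha_r\}$ equals $\Lambda(\alpha_1,\dots,\alpha_{r-1})$; (4) for every $j\in[r]$, the projection $\Lambda_{[r]\setminus\{j\}}=\{\mathbf x_{-j}:\mathbf x\in\Lambda\}$ equals $\Lambda(\alpha_2,\dots,\alpha_r)$; (5) $\delta_{qk}(q\cdot\Lambda)=q^r\delta_k(\Lambda)$ for all $q,k>0$.
   Context: SIM-body: $\Lambda(\alpha_1,\dots,\alpha_r)=\{\mathbf x\in\mathbb R_+^r:\sum_{j\in J}x_j\le\sum_{j=r-|J|+1}^r\alpha_j\ \forall J\subseteq[r]\}$ (with $\Lambda()$ of the empty sequence being the single point of $\mathbb R^0$), and $q\cdot\Lambda(\alpha_1,\dots,\alpha_r)=\Lambda(q\alpha_1,\dots,q\alpha_r)$. The downwards closure of $S\subseteq\mathbb R_+^r$ is $\{\mathbf x\in\mathbb R_+^r:\exists\mathbf y\in S,\ \mathbf x\le\mathbf y\}$. The width of a symmetric body is the length of its projection onto any coordinate axis. For $k>0$ and an $r$-dimensional body $A$, $\delta_k(A)=|A|-k\sum_{j=1}^r|A_{[r]\setminus\{j\}}|$ with $|\cdot|$ Lebesgue measure of the relevant dimension.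 *)

theory Defs
  imports "HOL-Analysis.Analysis" "HOL-Library.Function_Algebras"
begin

text \<open>Points of R^r are modelled as functions nat => real that vanish outside {..<r}
  (coordinate i+1 of the paper is the value at i). To use the library convex hull we
  equip functions with the pointwise real vector space structure.\<close>

instantiation "fun" :: (type, real_vector) real_vector
begin
definition scaleR_fun :: "real \<Rightarrow> ('a \<Rightarrow> 'b) \<Rightarrow> 'a \<Rightarrow> 'b" where
  "scaleR_fun c f = (\<lambda>x. c *\<^sub>R f x)"
instance by standard (auto simp: scaleR_fun_def fun_eq_iff algebra_simps)
end

text \<open>The nonnegative orthant R_+^r.\<close>
definition orthant :: "nat \<Rightarrow> (nat \<Rightarrow> real) set" where
  "orthant r = {x. (\<forall>i. r \<le> i \<longrightarrow> x i = 0) \<and> (\<forall>i<r. 0 \<le> x i)}"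

text \<open>SIM-body Lambda(alpha_1,...,alpha_r), with alpha_(i+1) = alpha i.\<close>
definition SIM :: "nat \<Rightarrow> (nat \<Rightarrow> real) \<Rightarrow> (nat \<Rightarrow> real) set" where
  "SIM r \<alpha> = {x \<in> orthant r. \<forall>J \<subseteq> {..<r}. (\<Sum>j\<in>J. x j) \<le> (\<Sum>j\<in>{r - card J..<r}. \<alpha> j)}"

text \<open>Downwards closure of S in R_+^r.\<close>
definition down_closure :: "nat \<Rightarrow> (nat \<Rightarrow> real) set \<Rightarrow> (nat \<Rightarrow> real) set" where
  "down_closure r S = {x \<in> orthant r. \<exists>y\<in>S. x \<le> y}"

text \<open>All coordinate permutations of the vector (alpha_1,...,alpha_r).\<close>
definition coord_perms :: "nat \<Rightarrow> (nat \<Rightarrow> real) \<Rightarrow> (nat \<Rightarrow> real) set" where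
  "coord_perms r \<alpha> = {(\<lambda>i. if i < r then \<alpha> (\<sigma> i) else 0) | \<sigma>. \<sigma> permutes {..<r}}"

text \<open>x_{-j}: delete coordinate j (0-based), shifting later coordinates down.\<close>
definition del_coord :: "nat \<Rightarrow> (nat \<Rightarrow> real) \<Rightarrow> nat \<Rightarrow> real" where
  "del_coord j x = (\<lambda>i. if i < j then x i else x (Suc i))"

text \<open>Projection A_{[r] - {j}}.\<close>
definition proj_del :: "nat \<Rightarrow> (nat \<Rightarrow> real) set \<Rightarrow> (nat \<Rightarrow> real) set" where
  "proj_del j A = del_coord j ` A"

text \<open>r-dimensional Lebesgue measure of a body A in R^r.\<close>
definition vol :: "nat \<Rightarrow> (nat \<Rightarrow> real) set \<Rightarrow> real" where
  "vol r A = measure (Pi\<^sub>M {..<r} (\<lambda>_. lborel)) ((\<lambda>x. restrict x {..<r}) ` A)"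

text \<open>Length of the projection of A onto the j-th coordinate axis.\<close>
definition axis_length :: "(nat \<Rightarrow> real) set \<Rightarrow> nat \<Rightarrow> real" where
  "axis_length A j = measure lborel ((\<lambda>x. x j) ` A)"

text \<open>delta_k(A) = |A| - k * sum_j |A_{[r]-{j}}|.\<close>
definition delta :: "nat \<Rightarrow> real \<Rightarrow> (nat \<Rightarrow> real) set \<Rightarrow> real" where
  "delta r k A = vol r A - k * (\<Sum>j<r. vol (r - 1) (proj_del j A))"

end

theory Submission
  imports Defs
begin

definition Lam :: "nat set \<Rightarrow> (nat \<Rightarrow> real) \<Rightarrow> (nat \<Rightarrow> real) set" where
  "Lam I v = {x. (\<forall>i. i \<notin> I \<longrightarrow> x i = 0) \<and> (\<forall>i\<in>I. 0 \<le> x i) \<and> (\<forall>J\<subseteq>I. sum x J \<le> sum v {..<card J})}"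

definition Perm :: "nat set \<Rightarrow> (nat \<Rightarrow> real) \<Rightarrow> (nat \<Rightarrow> real) set" where
  "Perm I v = {(\<lambda>i. if i \<in> I then v (\<sigma> i) else 0) | \<sigma>. bij_betw \<sigma> I {..<card I}}"

definition Dn :: "nat set \<Rightarrow> (nat \<Rightarrow> real) \<Rightarrow> (nat \<Rightarrow> real) set" where
  "Dn I v = {x. (\<forall>i. i \<notin> I \<longrightarrow> x i = 0) \<and> (\<forall>i\<in>I. 0 \<le> x i) \<and> (\<exists>y\<in>convex hull (Perm I v). x \<le> y)}"

definition good :: "nat \<Rightarrow> (nat \<Rightarrow> real) \<Rightarrow> bool" where
  "good n v \<longleftrightarrow> (\<forall>i j. i \<le> j \<longrightarrow> j < n \<longrightarrow> v j \<le> v i) \<and> (\<forall>i<n. 0 \<le> v i)"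

definition rx :: "nat set \<Rightarrow> (nat \<Rightarrow> real) \<Rightarrow> nat \<Rightarrow> real" where
  "rx J x = (\<lambda>i. if i \<in> J then x i else 0)"

lemma scaleR_app[simp]: "(c *\<^sub>R f) i = c * f i"
  by (simp add: scaleR_fun_def)

lemma hull_coord_zero:
  assumes "y \<in> convex hull S" "\<forall>p\<in>S. p i = (0::real)"
  shows "y i = 0"
proof -
  have "convex hull S \<subseteq> {y. y i = 0}"
    by (rule hull_minimal) (use assms in \<open>auto simp: convex_def\<close>)
  with assms show ?thesis by auto
qed

lemma hull_coord_nonneg:
  assumes "y \<in> convex hull S" "\<forall>p\<in>S. p i \<ge> (0::real)"
  shows "y i \<ge> 0"
proof -
  have "convex hull S \<subseteq> {y. y i \<ge> 0}"
    by (rule hull_minimal) (use assms in \<open>auto simp: convex_def\<close>)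
  with assms show ?thesis by auto
qed

lemma hull_sums:
  fixes S T :: "('a::real_vector) set"
  assumes "x \<in> convex hull S" "y \<in> convex hull T"
  shows "x + y \<in> convex hull {p + q | p q. p \<in> S \<and> q \<in> T}"
proof -
  let ?C = "convex hull {p + q | p q. p \<in> S \<and> q \<in> T}"
  have c: "convex ?C" by simp
  have 1: "p + y' \<in> ?C" if "p \<in> S" "y' \<in> convex hull T" for p y'
  proof -
    have "convex hull T \<subseteq> {z. p + z \<in> ?C}"
    proof (rule hull_minimal)
      show "T \<subseteq> {z. p + z \<in> ?C}" using that by (auto intro!: hull_inc)
      show "convex {z. p + z \<in> ?C}"
      proof (rule convexI)
        fix a b :: 'a and u v :: real
        assume "a \<in> {z. p + z \<in> ?C}" "b \<in> {z. p + z \<in> ?C}" "0 \<le> u" "0 \<le> v" "u + v = 1"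
        then have "u *\<^sub>R (p + a) + v *\<^sub>R (p + b) \<in> ?C" using c by (auto simp: convex_def)
        moreover have "u *\<^sub>R (p + a) + v *\<^sub>R (p + b) = p + (u *\<^sub>R a + v *\<^sub>R b)"
          using \<open>u + v = 1\<close> by (simp add: algebra_simps flip: scaleR_add_left)
        ultimately show "u *\<^sub>R a + v *\<^sub>R b \<in> {z. p + z \<in> ?C}" by simp
      qed
    qed
    then show ?thesis using that by auto
  qed
  have "convex hull S \<subseteq> {z. z + y \<in> ?C}"
  proof (rule hull_minimal)
    show "S \<subseteq> {z. z + y \<in> ?C}" using 1 assms by auto
    show "convex {z. z + y \<in> ?C}"
    proof (rule convexI)
      fix a b :: 'a and u v :: real
      assume "a \<in> {z. z + y \<in> ?C}" "b \<in> {z. z + y \<in> ?C}" "0 \<le> u" "0 \<le> v" "u + v = 1"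
      then have "u *\<^sub>R (a + y) + v *\<^sub>R (b + y) \<in> ?C" using c by (auto simp: convex_def)
      moreover have "u *\<^sub>R (a + y) + v *\<^sub>R (b + y) = (u *\<^sub>R a + v *\<^sub>R b) + y"
        using \<open>u + v = 1\<close> by (simp add: algebra_simps flip: scaleR_add_left)
      ultimately show "u *\<^sub>R a + v *\<^sub>R b \<in> {z. z + y \<in> ?C}" by simp
    qed
  qed
  then show ?thesis using assms by auto
qed

lemma Perm_exists:
  assumes "finite I"
  obtains \<sigma> where "bij_betw \<sigma> I {..<card I}"
proof -
  have "finite {..<card I}" "card I = card {..<card I}" using assms by auto
  then show ?thesis using that finite_same_card_bij[OF assms] by blast
qed

lemma Perm_nonneg:
  assumes "good (card I) v" "p \<in> Perm I v"
  shows "p i \<ge> 0"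
proof -
  obtain \<sigma> where s: "bij_betw \<sigma> I {..<card I}" "p = (\<lambda>i. if i \<in> I then v (\<sigma> i) else 0)"
    using assms(2) unfolding Perm_def by blast
  show ?thesis
  proof (cases "i \<in> I")
    case True
    then have "\<sigma> i < card I" using s(1) bij_betwE by blast
    then show ?thesis using True s(2) assms(1) unfolding good_def by simp
  qed (simp add: s(2))
qed

lemma Perm_supp:
  assumes "p \<in> Perm I v" "i \<notin> I"
  shows "p i = 0"
  using assms unfolding Perm_def by auto

lemma zero_Dn:
  assumes "finite I" "good (card I) v"
  shows "(\<lambda>_. 0) \<in> Dn I v"
proof -
  obtain \<sigma> where s: "bij_betw \<sigma> I {..<card I}" using Perm_exists[OF assms(1)] by blast
  let ?p = "\<lambda>i. if i \<in> I then v (\<sigma> i) else 0"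
  have p: "?p \<in> Perm I v" using s unfolding Perm_def by blast
  then have "?p \<in> convex hull Perm I v" by (rule hull_inc)
  moreover have "(\<lambda>_. 0) \<le> ?p" using Perm_nonneg[OF assms(2) p] by (simp add: le_fun_def)
  ultimately show ?thesis unfolding Dn_def by auto
qed

lemma Dn_convex:
  assumes "u \<in> Dn I v" "w \<in> Dn I v" "0 \<le> l" "l \<le> 1"
    and "\<And>i. x i = l * u i + (1 - l) * w i"
  shows "x \<in> Dn I v"
proof -
  obtain y1 where y1: "y1 \<in> convex hull Perm I v" "u \<le> y1" using assms(1) unfolding Dn_def by auto
  obtain y2 where y2: "y2 \<in> convex hull Perm I v" "w \<le> y2" using assms(2) unfolding Dn_def by auto
  have "l *\<^sub>R y1 + (1 - l) *\<^sub>R y2 \<in> convex hull Perm I v"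
    by (intro convexD[OF convex_convex_hull]) (use y1 y2 assms(3,4) in auto)
  moreover have "x \<le> l *\<^sub>R y1 + (1 - l) *\<^sub>R y2"
    unfolding le_fun_def
  proof
    fix i
    have "u i \<le> y1 i" "w i \<le> y2 i" using y1 y2 by (auto simp: le_fun_def)
    then have "l * u i \<le> l * y1 i" "(1 - l) * w i \<le> (1 - l) * y2 i"
      using assms(3,4) by (auto intro: mult_left_mono)
    then show "x i \<le> (l *\<^sub>R y1 + (1 - l) *\<^sub>R y2) i" using assms(5)[of i] by simp
  qed
  moreover have "\<forall>i. i \<notin> I \<longrightarrow> x i = 0" "\<forall>i\<in>I. 0 \<le> x i"
    using assms unfolding Dn_def by auto
  ultimately show ?thesis unfolding Dn_def by blast
qed

lemma sum_shift: "sum v {..<j + k} = sum v {..<j} + sum (\<lambda>i. v (j + i)) {..<(k::nat)}"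
  by (induction k) (auto simp: add.assoc)

lemma good_shift:
  assumes "good n v" "j \<le> n"
  shows "good (n - j) (\<lambda>i. v (j + i))"
  using assms unfolding good_def by auto

lemma good_mono:
  assumes "good n v" "m \<le> n"
  shows "good m v"
  using assms unfolding good_def by auto

lemma Dn_split:
  assumes "finite I" "J \<subseteq> I" "\<forall>i. i \<notin> I \<longrightarrow> x i = 0"
    and A: "rx J x \<in> Dn J v" and B: "rx (I - J) x \<in> Dn (I - J) (\<lambda>i. v (card J + i))"
  shows "x \<in> Dn I v"
proof -
  obtain y1 where y1: "y1 \<in> convex hull Perm J v" "rx J x \<le> y1" using A unfolding Dn_def by auto
  obtain y2 where y2: "y2 \<in> convex hull Perm (I - J) (\<lambda>i. v (card J + i))" "rx (I - J) x \<le> y2"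
    using B unfolding Dn_def by auto
  have s: "y1 + y2 \<in> convex hull {p + q | p q. p \<in> Perm J v \<and> q \<in> Perm (I - J) (\<lambda>i. v (card J + i))}"
    using hull_sums[OF y1(1) y2(1)] .
  have sub: "{p + q | p q. p \<in> Perm J v \<and> q \<in> Perm (I - J) (\<lambda>i. v (card J + i))} \<subseteq> Perm I v"
  proof safe
    fix p q assume p: "p \<in> Perm J v" and q: "q \<in> Perm (I - J) (\<lambda>i. v (card J + i))"
    obtain s1 where s1: "bij_betw s1 J {..<card J}" "p = (\<lambda>i. if i \<in> J then v (s1 i) else 0)"
      using p unfolding Perm_def by auto
    obtain s2 where s2: "bij_betw s2 (I - J) {..<card (I - J)}" "q = (\<lambda>i. if i \<in> I - J then v (card J + s2 i) else 0)"
      using q unfolding Perm_def by auto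
    define s where "s i = (if i \<in> J then s1 i else card J + s2 i)" for i
    have fJ: "finite J" using assms(1,2) finite_subset by blast
    have cI: "card I = card J + card (I - J)"
      using assms(1,2) fJ by (metis card_Diff_subset card_mono le_add_diff_inverse)
    have bs: "bij_betw s I {..<card I}"
    proof -
      have e1: "bij_betw s J {..<card J}"
        using s1(1) by (rule bij_betw_cong[THEN iffD1, rotated]) (auto simp: s_def)
      have e2: "bij_betw ((+) (card J) \<circ> s2) (I - J) ((+) (card J) ` {..<card (I - J)})"
        by (rule bij_betw_trans[OF s2(1)]) (simp add: bij_betw_def)
      then have e2': "bij_betw s (I - J) ((+) (card J) ` {..<card (I - J)})"
        by (rule bij_betw_cong[THEN iffD1, rotated]) (auto simp: s_def)
      have "bij_betw s (J \<union> (I - J)) ({..<card J} \<union> (+) (card J) ` {..<card (I - J)})"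
        by (rule bij_betw_combine[OF e1 e2']) auto
      moreover have "J \<union> (I - J) = I" using assms(2) by auto
      moreover have "{..<card J} \<union> (+) (card J) ` {..<card (I - J)} = {..<card I}"
      proof -
        have "(+) (card J) ` {..<card (I - J)} = {card J..<card I}"
          using cI atLeast0LessThan image_add_atLeastLessThan[of "card J" 0 "card (I - J)"] by (simp add: add.commute)
        then show ?thesis using cI by auto
      qed
      ultimately show ?thesis by simp
    qed
    have "p + q = (\<lambda>i. if i \<in> I then v (s i) else 0)"
      using assms(2) by (auto simp: s1(2) s2(2) s_def fun_eq_iff)
    then show "p + q \<in> Perm I v" unfolding Perm_def using bs by blast
  qed
  have "y1 + y2 \<in> convex hull Perm I v" using s hull_mono[OF sub] by blast
  moreover have "x \<le> y1 + y2"
    unfolding le_fun_def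
  proof
    fix i
    show "x i \<le> (y1 + y2) i"
    proof (cases "i \<in> I")
      case True
      show ?thesis
      proof (cases "i \<in> J")
        case True
        have "y2 i = 0"
          by (rule hull_coord_zero[OF y2(1)]) (use True Perm_supp in blast)
        moreover have "rx J x i \<le> y1 i" using y1(2) by (simp add: le_fun_def)
        ultimately show ?thesis using True by (simp add: rx_def)
      next
        case False
        have "y1 i = 0"
          by (rule hull_coord_zero[OF y1(1)]) (use False Perm_supp in blast)
        moreover have "rx (I - J) x i \<le> y2 i" using y2(2) by (simp add: le_fun_def)
        ultimately show ?thesis using False \<open>i \<in> I\<close> by (simp add: rx_def)
      qed
    next
      case False
      have "y1 i = 0"
        by (rule hull_coord_zero[OF y1(1)]) (use False assms(2) Perm_supp in blast)
      moreover have "y2 i = 0"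
        by (rule hull_coord_zero[OF y2(1)]) (use False Perm_supp in blast)
      ultimately show ?thesis using False assms(3) by simp
    qed
  qed
  moreover have "\<forall>i\<in>I. 0 \<le> x i"
  proof
    fix i assume "i \<in> I"
    show "0 \<le> x i"
    proof (cases "i \<in> J")
      case True then show ?thesis using A unfolding Dn_def rx_def by (auto dest: spec[of _ i])
    next
      case False then show ?thesis using B \<open>i \<in> I\<close> unfolding Dn_def rx_def by (auto dest: bspec[of _ _ i])
    qed
  qed
  ultimately show ?thesis using assms(3) unfolding Dn_def by blast
qed

definition PP :: "nat set \<Rightarrow> (nat \<Rightarrow> real) \<Rightarrow> (nat \<Rightarrow> real) \<Rightarrow> bool" where
  "PP I v x \<longleftrightarrow> (\<exists>i\<in>I. x i = 0) \<or> (\<exists>J\<subseteq>I. J \<noteq> {} \<and> J \<noteq> I \<and> sum x J = sum v {..<card J})"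

lemma sum_rx: "finite K \<Longrightarrow> K \<subseteq> J \<Longrightarrow> sum (rx J x) K = sum x K"
  by (intro sum.cong) (auto simp: rx_def)

lemma Lam_rx:
  assumes "finite I" "x \<in> Lam I v" "J \<subseteq> I"
  shows "rx J x \<in> Lam J v"
proof -
  have fJ: "finite J" using assms finite_subset by blast
  have xl: "\<forall>K\<subseteq>I. sum x K \<le> sum v {..<card K}" "\<forall>i\<in>I. 0 \<le> x i"
    using assms(2) unfolding Lam_def by auto
  show ?thesis unfolding Lam_def
  proof (intro CollectI conjI allI impI ballI)
    fix i assume "i \<notin> J" then show "rx J x i = 0" by (simp add: rx_def)
  next
    fix i assume "i \<in> J" then show "0 \<le> rx J x i" using xl(2) assms(3) by (auto simp: rx_def)
  next
    fix K assume K: "K \<subseteq> J"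
    then have "sum (rx J x) K = sum x K" using sum_rx[OF finite_subset[OF K fJ] K] by simp
    then show "sum (rx J x) K \<le> sum v {..<card K}" using xl(1) K assms(3) by auto
  qed
qed

lemma Lam_rx_rest:
  assumes "finite I" "x \<in> Lam I v" "J \<subseteq> I" "sum x J = sum v {..<card J}"
  shows "rx (I - J) x \<in> Lam (I - J) (\<lambda>i. v (card J + i))"
proof -
  have fJ: "finite J" using assms finite_subset by blast
  have xl: "\<forall>K\<subseteq>I. sum x K \<le> sum v {..<card K}" "\<forall>i. i \<notin> I \<longrightarrow> x i = 0" "\<forall>i\<in>I. 0 \<le> x i"
    using assms(2) unfolding Lam_def by auto
  have "sum (rx (I - J) x) K \<le> sum (\<lambda>i. v (card J + i)) {..<card K}" if K: "K \<subseteq> I - J" for K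
  proof -
    have fK: "finite K" using K assms(1) finite_subset by blast
    have d: "J \<inter> K = {}" using K by auto
    have "sum (rx (I - J) x) K = sum x K" using sum_rx[OF fK K] .
    also have "\<dots> = sum x (J \<union> K) - sum x J" using sum.union_disjoint[OF fJ fK d, of x] by simp
    also have "\<dots> \<le> sum v {..<card (J \<union> K)} - sum v {..<card J}"
      using xl(1) K assms(3,4) by (simp add: subset_iff)
    also have "card (J \<union> K) = card J + card K" using card_Un_disjoint[OF fJ fK d] .
    finally show ?thesis by (simp add: sum_shift)
  qed
  then show ?thesis using xl unfolding Lam_def by (auto simp: rx_def)
qed

lemma sum_move:
  assumes "finite J" "a \<noteq> b"
  shows "sum (\<lambda>i. x i + (if i = a then t else 0) - (if i = b then t else 0)) J
     = sum x J + (if a \<in> J then t else 0) - (if b \<in> J then t else (0::real))"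
  using assms by (simp add: sum.distrib sum_subtractf sum.delta)

lemma move:
  assumes "finite I" "x \<in> Lam I v" "a \<in> I" "b \<in> I" "a \<noteq> b" "\<not> PP I v x"
  shows "\<exists>t>0. (\<lambda>i. x i + (if i = a then t else 0) - (if i = b then t else 0)) \<in> Lam I v
     \<and> PP I v (\<lambda>i. x i + (if i = a then t else 0) - (if i = b then t else 0))"
proof -
  have xl: "\<forall>K\<subseteq>I. sum x K \<le> sum v {..<card K}" "\<forall>i. i \<notin> I \<longrightarrow> x i = 0" "\<forall>i\<in>I. 0 \<le> x i"
    using assms(2) unfolding Lam_def by auto
  define F where "F = {J. J \<subseteq> I \<and> a \<in> J \<and> b \<notin> J}"
  define sl where "sl J = sum v {..<card J} - sum x J" for J
  have fF: "finite F" unfolding F_def using assms(1) by (auto intro: finite_subset[of _ "Pow I"])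
  have neF: "{a} \<in> F" using assms unfolding F_def by auto
  have slpos: "sl J > 0" if "J \<in> F" for J
  proof -
    have "J \<subseteq> I" "J \<noteq> {}" "J \<noteq> I" using that assms(4) unfolding F_def by auto
    then have "sum x J \<noteq> sum v {..<card J}" using assms(6) unfolding PP_def by blast
    moreover have "sum x J \<le> sum v {..<card J}" using xl(1) \<open>J \<subseteq> I\<close> by blast
    ultimately show ?thesis unfolding sl_def by simp
  qed
  define m where "m = Min (sl ` F)"
  have mpos: "m > 0" unfolding m_def using fF neF slpos by (subst Min_gr_iff) auto
  have mle: "m \<le> sl J" if "J \<in> F" for J unfolding m_def using fF that by simp
  have xb: "x b > 0" using xl(3) assms(4,6) unfolding PP_def by (metis less_eq_real_def)
  define t where "t = min (x b) m"
  define u where "u = (\<lambda>i. x i + (if i = a then t else 0) - (if i = b then t else 0))"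
  have tpos: "t > 0" unfolding t_def using xb mpos by simp
  have su: "sum u J = sum x J + (if a \<in> J then t else 0) - (if b \<in> J then t else 0)"
    if "finite J" for J unfolding u_def using sum_move[OF that assms(5)] .
  have uL: "u \<in> Lam I v"
    unfolding Lam_def
  proof (intro CollectI conjI allI impI ballI)
    fix i assume "i \<notin> I" then show "u i = 0" using xl(2) assms(3,4) unfolding u_def by auto
  next
    fix i assume "i \<in> I" then show "0 \<le> u i" using xl(3) assms(5) tpos unfolding u_def t_def by auto
  next
    fix J assume J: "J \<subseteq> I"
    then have fJ: "finite J" using assms(1) finite_subset by blast
    have le: "sum x J \<le> sum v {..<card J}" using xl(1) J by blast
    show "sum u J \<le> sum v {..<card J}"
    proof (cases "a \<in> J \<and> b \<notin> J")
      case True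
      then have "J \<in> F" using J unfolding F_def by auto
      then have "t \<le> sl J" using mle[of J] unfolding t_def by simp
      then show ?thesis using su[OF fJ] True unfolding sl_def by simp
    next
      case False
      then show ?thesis using su[OF fJ] le tpos by auto
    qed
  qed
  have uP: "PP I v u"
  proof (cases "t = x b")
    case True
    then have "u b = 0" using assms(5) unfolding u_def by simp
    then show ?thesis using assms(4) unfolding PP_def by blast
  next
    case False
    then have "t = m" unfolding t_def by (simp add: min_def split: if_splits)
    have "m \<in> sl ` F" unfolding m_def using fF neF by (intro Min_in) auto
    then obtain J where J: "J \<in> F" "m = sl J" by blast
    then have JI: "J \<subseteq> I" "a \<in> J" "b \<notin> J" unfolding F_def by auto
    then have fJ: "finite J" using assms(1) finite_subset by blast
    have "sum u J = sum v {..<card J}" using su[OF fJ] JI J(2) \<open>t = m\<close> unfolding sl_def by simp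
    moreover have "J \<noteq> {}" "J \<noteq> I" using JI assms(4) by auto
    ultimately show ?thesis using JI unfolding PP_def by blast
  qed
  show ?thesis using tpos uL uP unfolding u_def by blast
qed

lemma PP_Dn:
  assumes IH: "\<And>I' v' x'. card I' < card I \<Longrightarrow> finite I' \<Longrightarrow> good (card I') v' \<Longrightarrow> x' \<in> Lam I' v' \<Longrightarrow> x' \<in> Dn I' v'"
    and fI: "finite I" and g: "good (card I) v" and xL: "x \<in> Lam I v" and P: "PP I v x"
  shows "x \<in> Dn I v"
proof -
  have supp: "\<forall>i. i \<notin> I \<longrightarrow> x i = 0" using xL unfolding Lam_def by auto
  from P show ?thesis unfolding PP_def
  proof (elim disjE bexE exE conjE)
    fix i assume i: "i \<in> I" "x i = 0"
    define J where "J = I - {i}"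
    have JI: "J \<subseteq> I" unfolding J_def by auto
    have fJ: "finite J" using fI JI finite_subset by blast
    have cJ: "card J < card I" unfolding J_def proof -
      have "card I > 0" using i fI card_gt_0_iff by blast
      then show "card (I - {i}) < card I" using i fI by simp
    qed
    have A: "rx J x \<in> Dn J v"
      by (rule IH[OF cJ fJ good_mono[OF g card_mono[OF fI JI]] Lam_rx[OF fI xL JI]])
    have IJ: "I - J = {i}" unfolding J_def using i by auto
    have z: "rx (I - J) x = (\<lambda>_. 0)" unfolding IJ rx_def using i by auto
    have "good (card I - card J) (\<lambda>k. v (card J + k))"
      by (rule good_shift[OF g card_mono[OF fI JI]])
    then have "good (card (I - J)) (\<lambda>k. v (card J + k))"
      using card_Diff_subset[OF fJ JI] by simp
    then have B: "rx (I - J) x \<in> Dn (I - J) (\<lambda>k. v (card J + k))"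
      unfolding z by (rule zero_Dn[rotated]) (simp add: IJ)
    show ?thesis by (rule Dn_split[OF fI JI supp A B])
  next
    fix J assume J: "J \<subseteq> I" "J \<noteq> {}" "J \<noteq> I" "sum x J = sum v {..<card J}"
    have fJ: "finite J" using fI J finite_subset by blast
    have cJ: "card J < card I" using J fI by (simp add: psubset_card_mono psubset_eq)
    have A: "rx J x \<in> Dn J v"
      by (rule IH[OF cJ fJ good_mono[OF g card_mono[OF fI J(1)]] Lam_rx[OF fI xL J(1)]])
    have cJ2: "card (I - J) < card I" using J fI fJ
      by (metis Diff_subset card_Diff_subset card_gt_0_iff diff_less psubset_card_mono  subset_empty Diff_partition card_mono)
    have "good (card I - card J) (\<lambda>k. v (card J + k))"
      by (rule good_shift[OF g card_mono[OF fI J(1)]])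
    then have g2: "good (card (I - J)) (\<lambda>k. v (card J + k))"
      using card_Diff_subset[OF fJ J(1)] by simp
    have B: "rx (I - J) x \<in> Dn (I - J) (\<lambda>k. v (card J + k))"
      by (rule IH[OF cJ2 _ g2 Lam_rx_rest[OF fI xL J(1) J(4)]]) (use fI in simp)
    show ?thesis by (rule Dn_split[OF fI J(1) supp A B])
  qed
qed

lemma Lam_Dn:
  assumes "finite I" "good (card I) v" "x \<in> Lam I v"
  shows "x \<in> Dn I v"
  using assms
proof (induction "card I" arbitrary: I v x rule: less_induct)
  case less
  have IH: "\<And>I' v' x'. card I' < card I \<Longrightarrow> finite I' \<Longrightarrow> good (card I') v' \<Longrightarrow> x' \<in> Lam I' v' \<Longrightarrow> x' \<in> Dn I' v'"
    using less.hyps by blast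
  have xl: "\<forall>K\<subseteq>I. sum x K \<le> sum v {..<card K}" "\<forall>i. i \<notin> I \<longrightarrow> x i = 0" "\<forall>i\<in>I. 0 \<le> x i"
    using less.prems(3) unfolding Lam_def by auto
  show ?case
  proof (cases "PP I v x")
    case True
    then show ?thesis using PP_Dn[OF IH less.prems] by blast
  next
    case nP: False
    show ?thesis
    proof (cases "card I \<le> 1")
      case True
      then consider "I = {}" | a where "I = {a}" using less.prems(1)
        by (metis card_0_eq card_1_singletonE le_eq_less_or_eq less_one)
      then show ?thesis
      proof cases
        case 1
        then have "x = (\<lambda>_. 0)" using xl(2) by auto
        then show ?thesis using zero_Dn[OF less.prems(1,2)] by simp
      next
        case (2 a)
        let ?p = "\<lambda>i. if i \<in> I then v ((\<lambda>_. 0::nat) i) else 0"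
        have "bij_betw (\<lambda>_. 0::nat) I {..<card I}" using 2 by (simp add: bij_betw_def lessThan_Suc)
        then have "?p \<in> Perm I v" unfolding Perm_def by (intro CollectI exI[of _ "\<lambda>_. 0::nat"]) simp
        then have "?p \<in> convex hull Perm I v" by (rule hull_inc)
        moreover have "x \<le> ?p"
        proof -
          have "sum x {a} \<le> sum v {..<card {a}}" using xl(1) 2 by blast
          then have "x a \<le> v 0" by simp
          then show ?thesis using xl(2) 2 by (auto simp: le_fun_def)
        qed
        ultimately show ?thesis using xl unfolding Dn_def by blast
      qed
    next
      case False
      have "\<not> (\<forall>a\<in>I. \<forall>b\<in>I. a = b)" using False card_le_Suc0_iff_eq[OF less.prems(1)] by simp
      then obtain a b where ab: "a \<in> I" "b \<in> I" "a \<noteq> b" by blast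
      obtain t where t: "t > 0" "(\<lambda>i. x i + (if i = a then t else 0) - (if i = b then t else 0)) \<in> Lam I v"
        "PP I v (\<lambda>i. x i + (if i = a then t else 0) - (if i = b then t else 0))"
        using move[OF less.prems(1,3) ab nP] by blast
      obtain s where s: "s > 0" "(\<lambda>i. x i + (if i = b then s else 0) - (if i = a then s else 0)) \<in> Lam I v"
        "PP I v (\<lambda>i. x i + (if i = b then s else 0) - (if i = a then s else 0))"
        using move[OF less.prems(1,3) ab(2,1) ab(3)[symmetric] nP] by blast
      have u: "(\<lambda>i. x i + (if i = a then t else 0) - (if i = b then t else 0)) \<in> Dn I v"
        by (rule PP_Dn[OF IH less.prems(1,2) t(2,3)])
      have w: "(\<lambda>i. x i + (if i = b then s else 0) - (if i = a then s else 0)) \<in> Dn I v"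
        by (rule PP_Dn[OF IH less.prems(1,2) s(2,3)])
      show ?thesis
      proof (rule Dn_convex[OF u w])
        show "0 \<le> s / (t + s)" "s / (t + s) \<le> 1" using s t by auto
        fix i
        show "x i = s / (t + s) * (x i + (if i = a then t else 0) - (if i = b then t else 0)) +
                (1 - s / (t + s)) * (x i + (if i = b then s else 0) - (if i = a then s else 0))"
        proof -
          have d: "t + s \<noteq> 0" using s t by simp
          have e: "1 - s / (t + s) = t / (t + s)" using d by (simp add: field_simps)
          define U where "U = x i + (if i = a then t else 0) - (if i = b then t else 0)"
          define W where "W = x i + (if i = b then s else 0) - (if i = a then s else 0)"
          have h: "s * U + t * W = x i * (t + s)"
            using ab(3) unfolding U_def W_def by (auto simp: algebra_simps)
          have "s / (t + s) * U + t / (t + s) * W = (s * U + t * W) / (t + s)"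
            by (simp add: add_divide_distrib)
          also have "\<dots> = x i" unfolding h using d by simp
          finally show ?thesis unfolding e U_def W_def by simp
        qed
      qed
    qed
  qed
qed

lemma top_sum:
  assumes A: "A \<subseteq> {..<n}" and g: "good n v"
  shows "sum v A \<le> sum v {..<card A}"
proof -
  let ?k = "card A" let ?B = "{..<card A}"
  have fA: "finite A" using A finite_subset by blast
  have kn: "?k \<le> n" using card_mono[OF _ A] by simp
  have B: "?B \<subseteq> {..<n}" using kn by auto
  have c: "card (A - ?B) = card (?B - A)"
  proof -
    have "card (A - ?B) = card A - card (A \<inter> ?B)" using fA by (intro card_Diff_subset_Int) simp
    moreover have "card (?B - A) = card ?B - card (?B \<inter> A)" by (intro card_Diff_subset_Int) simp
    ultimately show ?thesis by (simp add: Int_commute)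
  qed
  have sA: "sum v A = sum v (A \<inter> ?B) + sum v (A - ?B)"
    by (rule sum.Int_Diff[OF fA])
  have sB: "sum v ?B = sum v (A \<inter> ?B) + sum v (?B - A)"
    using sum.Int_Diff[of ?B v A] by (simp add: Int_commute)
  have "sum v (A - ?B) \<le> sum v (?B - A)"
  proof (cases "A - ?B = {}")
    case True
    have "card (?B - A) = 0" using c unfolding True by simp
    then have "?B - A = {}" by (metis card_0_eq finite_Diff finite_lessThan)
    then show ?thesis using True by simp
  next
    case False
    then have "\<exists>i\<in>A. \<not> i < ?k" by auto
    then obtain i where i: "i \<in> A" "i \<ge> ?k" by (auto simp: not_less)
    then have kl: "?k < n" using A by auto
    have "sum v (A - ?B) \<le> of_nat (card (A - ?B)) * v ?k"
      by (rule sum_bounded_above) (use A g kl in \<open>auto simp: good_def\<close>)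
    also have "\<dots> = of_nat (card (?B - A)) * v ?k" using c by simp
    also have "\<dots> \<le> sum v (?B - A)"
      by (rule sum_bounded_below) (use g kl in \<open>auto simp: good_def\<close>)
    finally show ?thesis .
  qed
  then show ?thesis using sA sB by linarith
qed

lemma Perm_Lam:
  assumes "finite I" "good (card I) v" "p \<in> Perm I v"
  shows "p \<in> Lam I v"
proof -
  have "\<exists>\<sigma>. p = (\<lambda>i. if i \<in> I then v (\<sigma> i) else 0) \<and> bij_betw \<sigma> I {..<card I}"
    using assms(3) unfolding Perm_def by (simp only: mem_Collect_eq)
  then obtain \<sigma> where s: "bij_betw \<sigma> I {..<card I}" "p = (\<lambda>i. if i \<in> I then v (\<sigma> i) else 0)"
    by (elim exE conjE) simp
  have C: "sum p J \<le> sum v {..<card J}" if J: "J \<subseteq> I" for J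
  proof -
    have inj: "inj_on \<sigma> J" by (rule inj_on_subset[OF bij_betw_imp_inj_on[OF s(1)] J])
    have "sum p J = sum (v \<circ> \<sigma>) J"
    proof (rule sum.cong)
      fix i assume "i \<in> J"
      then have "i \<in> I" using J by blast
      then show "p i = (v \<circ> \<sigma>) i" unfolding s(2) by simp
    qed simp
    also have "\<dots> = sum v (\<sigma> ` J)" by (rule sum.reindex[OF inj, symmetric])
    also have "\<dots> \<le> sum v {..<card (\<sigma> ` J)}"
    proof (rule top_sum[OF _ assms(2)])
      have "\<sigma> ` J \<subseteq> \<sigma> ` I" using J by (rule image_mono)
      also have "\<sigma> ` I = {..<card I}" by (rule bij_betw_imp_surj_on[OF s(1)])
      finally show "\<sigma> ` J \<subseteq> {..<card I}" .
    qed
    also have "card (\<sigma> ` J) = card J" by (rule card_image[OF inj])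
    finally show ?thesis .
  qed
  have A: "\<forall>i\<in>I. 0 \<le> p i" using Perm_nonneg[OF assms(2,3)] by simp
  have B: "\<forall>i. i \<notin> I \<longrightarrow> p i = 0" using Perm_supp[OF assms(3)] by simp
  show ?thesis unfolding Lam_def mem_Collect_eq
  proof (intro conjI)
    show "\<forall>J\<subseteq>I. sum p J \<le> sum v {..<card J}" using C by simp
  qed (rule B, rule A)
qed

lemma Lam_convex: "convex (Lam I v)"
proof (rule convexI)
  fix x y :: "nat \<Rightarrow> real" and u w :: real
  assume x: "x \<in> Lam I v" and y: "y \<in> Lam I v" and u: "0 \<le> u" "0 \<le> w" "u + w = 1"
  have xl: "\<forall>K\<subseteq>I. sum x K \<le> sum v {..<card K}" "\<forall>i. i \<notin> I \<longrightarrow> x i = 0" "\<forall>i\<in>I. 0 \<le> x i"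
    using x unfolding Lam_def by auto
  have yl: "\<forall>K\<subseteq>I. sum y K \<le> sum v {..<card K}" "\<forall>i. i \<notin> I \<longrightarrow> y i = 0" "\<forall>i\<in>I. 0 \<le> y i"
    using y unfolding Lam_def by auto
  have e: "u *\<^sub>R x + w *\<^sub>R y = (\<lambda>i. u * x i + w * y i)" by (simp add: fun_eq_iff)
  have C: "\<forall>J\<subseteq>I. sum (\<lambda>i. u * x i + w * y i) J \<le> sum v {..<card J}"
  proof (intro allI impI)
    fix J assume J: "J \<subseteq> I"
    have "sum (\<lambda>i. u * x i + w * y i) J = u * sum x J + w * sum y J"
      by (simp only: sum.distrib sum_distrib_left)
    also have "u * sum x J \<le> u * sum v {..<card J}" using xl(1) J u(1) mult_left_mono by blast
    also have "w * sum y J \<le> w * sum v {..<card J}" using yl(1) J u(2) mult_left_mono by blast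
    also have "u * sum v {..<card J} + w * sum v {..<card J} = sum v {..<card J}"
      using u(3) by (metis distrib_right mult_1)
    finally show "sum (\<lambda>i. u * x i + w * y i) J \<le> sum v {..<card J}" by simp
  qed
  have A: "\<forall>i. i \<notin> I \<longrightarrow> u * x i + w * y i = 0" using xl(2) yl(2) by simp
  have B: "\<forall>i\<in>I. 0 \<le> u * x i + w * y i" using xl(3) yl(3) u by simp
  show "u *\<^sub>R x + w *\<^sub>R y \<in> Lam I v" unfolding e Lam_def mem_Collect_eq
    using A B C by (intro conjI)
qed

lemma Dn_Lam:
  assumes "finite I" "good (card I) v" "x \<in> Dn I v"
  shows "x \<in> Lam I v"
proof -
  obtain y where y: "y \<in> convex hull Perm I v" "x \<le> y" and xs: "\<forall>i. i \<notin> I \<longrightarrow> x i = 0" "\<forall>i\<in>I. 0 \<le> x i"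
    using assms(3) unfolding Dn_def by blast
  have "convex hull Perm I v \<subseteq> Lam I v"
    by (rule hull_minimal) (use Perm_Lam[OF assms(1,2)] Lam_convex in auto)
  then have yL: "y \<in> Lam I v" using y by blast
  have "sum x J \<le> sum v {..<card J}" if J: "J \<subseteq> I" for J
  proof -
    have "sum x J \<le> sum y J" using y(2) by (intro sum_mono) (simp add: le_fun_def)
    also have "\<dots> \<le> sum v {..<card J}" using yL J unfolding Lam_def by auto
    finally show ?thesis .
  qed
  then show ?thesis using xs unfolding Lam_def by auto
qed

definition uj :: "nat \<Rightarrow> nat \<Rightarrow> nat" where "uj j i = (if i < j then i else Suc i)"
definition ins :: "nat \<Rightarrow> real \<Rightarrow> (nat \<Rightarrow> real) \<Rightarrow> nat \<Rightarrow> real" where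
  "ins j t y = (\<lambda>i. if i < j then y i else if i = j then t else y (i - 1))"

lemma del_uj: "del_coord j x = x \<circ> uj j"
  by (auto simp: del_coord_def uj_def fun_eq_iff)

lemma inj_uj: "inj (uj j)"
  by (auto simp: inj_def uj_def split: if_splits)

lemma del_ins: "del_coord j (ins j t y) = y"
  by (auto simp: del_coord_def ins_def fun_eq_iff)

lemma ins_j: "ins j t y j = t" by (simp add: ins_def)

lemma uj_image_vimage: "uj j ` (uj j -` J) = J - {j}"
proof -
  have "J - {j} \<subseteq> range (uj j)"
  proof
    fix i assume "i \<in> J - {j}"
    then have "i = uj j (if i < j then i else i - 1)" by (auto simp: uj_def)
    then show "i \<in> range (uj j)" by blast
  qed
  moreover have nr: "\<And>x. uj j x \<noteq> j" by (auto simp: uj_def)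
  ultimately show ?thesis by auto
qed

lemma S1:
  assumes "finite J"
  shows "sum x J = (if j \<in> J then x j else 0) + sum (del_coord j x) (uj j -` J)"
    and "card J = (if j \<in> J then 1 else 0) + card (uj j -` J)"
proof -
  have inj: "inj_on (uj j) (uj j -` J)" using inj_uj inj_on_subset by blast
  have "sum (del_coord j x) (uj j -` J) = sum x (uj j ` (uj j -` J))"
    unfolding del_uj by (rule sum.reindex[OF inj, symmetric])
  also have "\<dots> = sum x (J - {j})" by (simp only: uj_image_vimage)
  finally have a: "sum (del_coord j x) (uj j -` J) = sum x (J - {j})" .
  have "card (uj j -` J) = card (J - {j})"
    using card_image[OF inj] unfolding uj_image_vimage by simp
  then show "card J = (if j \<in> J then 1 else 0) + card (uj j -` J)"
  proof (cases "j \<in> J")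
    case True
    then show ?thesis using card_Suc_Diff1[OF assms True] \<open>card (uj j -` J) = card (J - {j})\<close> by simp
  next
    case False
    then have "J - {j} = J" by simp
    then show ?thesis using False \<open>card (uj j -` J) = card (J - {j})\<close> by simp
  qed
  show "sum x J = (if j \<in> J then x j else 0) + sum (del_coord j x) (uj j -` J)"
    unfolding a using assms by (simp add: sum_diff1)
qed

lemma S2:
  assumes "finite J'"
  shows "sum (del_coord j x) J' = sum x (uj j ` J')" "card (uj j ` J') = card J'"
    "uj j -` (uj j ` J') = J'" "j \<notin> uj j ` J'"
proof -
  have inj: "inj_on (uj j) J'" using inj_uj inj_on_subset by blast
  show "sum (del_coord j x) J' = sum x (uj j ` J')"
    unfolding del_uj by (rule sum.reindex[OF inj, symmetric])
  show "card (uj j ` J') = card J'" by (rule card_image[OF inj])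
  show "uj j -` (uj j ` J') = J'" by (rule inj_vimage_image_eq[OF inj_uj])
  have ne: "\<And>i. uj j i \<noteq> j" by (simp add: uj_def)
  show "j \<notin> uj j ` J'"
  proof
    assume "j \<in> uj j ` J'"
    then obtain i where "j = uj j i" by blast
    then show False using ne[of i] by simp
  qed
qed

lemma uj_lt: "j < r \<Longrightarrow> uj j i < r \<longleftrightarrow> i < r - 1"
  by (auto simp: uj_def)

lemma vimage_sub: "j < r \<Longrightarrow> J \<subseteq> {..<r} \<Longrightarrow> uj j -` J \<subseteq> {..<r - 1}"
  using uj_lt by auto

lemma image_sub: "j < r \<Longrightarrow> J' \<subseteq> {..<r - 1} \<Longrightarrow> uj j ` J' \<subseteq> {..<r}"
  using uj_lt by auto

lemma good_Suc_le: "good r v \<Longrightarrow> k \<le> r - 1 \<Longrightarrow> sum (\<lambda>i. v (Suc i)) {..<k} \<le> sum v {..<k}"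
  unfolding good_def by (intro sum_mono) auto

lemma del_Lam_supp:
  assumes "j < r" "\<forall>i. i \<notin> {..<r} \<longrightarrow> x i = 0" "\<forall>i\<in>{..<r}. 0 \<le> x i"
  shows "\<forall>i. i \<notin> {..<r-1} \<longrightarrow> del_coord j x i = 0" "\<forall>i\<in>{..<r-1}. 0 \<le> del_coord j x i"
  using assms uj_lt[OF assms(1)] by (auto simp: del_uj)

lemma ins_supp:
  assumes "j < r" "\<forall>i. i \<notin> {..<r-1} \<longrightarrow> y i = 0" "\<forall>i\<in>{..<r-1}. 0 \<le> y i" "0 \<le> t"
  shows "\<forall>i. i \<notin> {..<r} \<longrightarrow> ins j t y i = 0" "\<forall>i\<in>{..<r}. 0 \<le> ins j t y i"
  using assms by (auto simp: ins_def)

lemma part3: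
  assumes "j < r" "good r v"
  shows "{del_coord j x | x. x \<in> Lam {..<r} v \<and> x j = v 0} = Lam {..<r - 1} (\<lambda>i. v (Suc i))"
proof (intro equalityI subsetI)
  fix y assume "y \<in> {del_coord j x | x. x \<in> Lam {..<r} v \<and> x j = v 0}"
  then obtain x where x: "x \<in> Lam {..<r} v" "x j = v 0" "y = del_coord j x" by blast
  have xl: "\<forall>K\<subseteq>{..<r}. sum x K \<le> sum v {..<card K}" "\<forall>i. i \<notin> {..<r} \<longrightarrow> x i = 0" "\<forall>i\<in>{..<r}. 0 \<le> x i"
    using x(1) unfolding Lam_def by auto
  have "sum y J' \<le> sum (\<lambda>i. v (Suc i)) {..<card J'}" if J': "J' \<subseteq> {..<r - 1}" for J'
  proof -
    have fJ: "finite J'" using J' finite_subset by blast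
    let ?J = "insert j (uj j ` J')"
    have "?J \<subseteq> {..<r}" using image_sub[OF assms(1) J'] assms(1) by auto
    then have le: "sum x ?J \<le> sum v {..<card ?J}" using xl(1) by blast
    have e1: "sum x ?J = v 0 + sum y J'" using S2(1)[OF fJ, where j=j and x=x] S2(4)[OF fJ, where j=j] x(2,3) fJ by simp
    have e2: "card ?J = Suc (card J')" using S2(2)[OF fJ, where j=j] S2(4)[OF fJ, where j=j] fJ by simp
    have e3: "sum v {..<Suc (card J')} = v 0 + sum (\<lambda>i. v (Suc i)) {..<card J'}" by (rule sum.lessThan_Suc_shift)
    show ?thesis using le[unfolded e2] e1 e3 by linarith
  qed
  then show "y \<in> Lam {..<r - 1} (\<lambda>i. v (Suc i))"
    using del_Lam_supp[OF assms(1) xl(2,3)] x(3) unfolding Lam_def by auto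
next
  fix y assume y: "y \<in> Lam {..<r - 1} (\<lambda>i. v (Suc i))"
  have yl: "\<forall>K\<subseteq>{..<r-1}. sum y K \<le> sum (\<lambda>i. v (Suc i)) {..<card K}" "\<forall>i. i \<notin> {..<r-1} \<longrightarrow> y i = 0" "\<forall>i\<in>{..<r-1}. 0 \<le> y i"
    using y unfolding Lam_def by auto
  have v0: "0 \<le> v 0" using assms unfolding good_def by auto
  let ?x = "ins j (v 0) y"
  have "sum ?x J \<le> sum v {..<card J}" if J: "J \<subseteq> {..<r}" for J
  proof -
    have fJ: "finite J" using J finite_subset by blast
    have sub: "uj j -` J \<subseteq> {..<r-1}" by (rule vimage_sub[OF assms(1) J])
    have le: "sum y (uj j -` J) \<le> sum (\<lambda>i. v (Suc i)) {..<card (uj j -` J)}" using yl(1) sub by blast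
    have ck: "card (uj j -` J) \<le> r - 1" using card_mono[OF _ sub] by simp
    show ?thesis
    proof (cases "j \<in> J")
      case True
      have a: "sum ?x J = v 0 + sum y (uj j -` J)" using S1(1)[OF fJ, where x="?x" and j=j] True by (simp add: del_ins ins_j)
      have b: "card J = Suc (card (uj j -` J))" using S1(2)[OF fJ, where j=j] True by simp
      have c: "sum v {..<Suc (card (uj j -` J))} = v 0 + sum (\<lambda>i. v (Suc i)) {..<card (uj j -` J)}"
        by (rule sum.lessThan_Suc_shift)
      show ?thesis unfolding b using a c le by linarith
    next
      case False
      have a: "sum ?x J = sum y (uj j -` J)" using S1(1)[OF fJ, where x="?x" and j=j] False by (simp add: del_ins)
      have b: "card J = card (uj j -` J)" using S1(2)[OF fJ, where j=j] False by simp
      show ?thesis unfolding b using a le good_Suc_le[OF assms(2) ck] by linarith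
    qed
  qed
  then have "?x \<in> Lam {..<r} v" using ins_supp[OF assms(1) yl(2,3) v0] unfolding Lam_def by auto
  then show "y \<in> {del_coord j x | x. x \<in> Lam {..<r} v \<and> x j = v 0}"
    unfolding mem_Collect_eq using del_ins[of j "v 0" y] ins_j[of j "v 0" y] by (intro exI[of _ ?x]) simp
qed

lemma part4:
  assumes "j < r" "good r v"
  shows "proj_del j (Lam {..<r} v) = Lam {..<r - 1} v"
  unfolding proj_del_def
proof (intro equalityI subsetI)
  fix y assume "y \<in> del_coord j ` Lam {..<r} v"
  then obtain x where x: "x \<in> Lam {..<r} v" "y = del_coord j x" by blast
  have xl: "\<forall>K\<subseteq>{..<r}. sum x K \<le> sum v {..<card K}" "\<forall>i. i \<notin> {..<r} \<longrightarrow> x i = 0" "\<forall>i\<in>{..<r}. 0 \<le> x i"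
    using x(1) unfolding Lam_def by auto
  have "sum y J' \<le> sum v {..<card J'}" if J': "J' \<subseteq> {..<r - 1}" for J'
  proof -
    have fJ: "finite J'" using J' finite_subset by blast
    have "uj j ` J' \<subseteq> {..<r}" using image_sub[OF assms(1) J'] .
    then have "sum x (uj j ` J') \<le> sum v {..<card (uj j ` J')}" using xl(1) by blast
    then show ?thesis using S2(1)[OF fJ, where j=j and x=x] S2(2)[OF fJ, where j=j] x(2) by simp
  qed
  then show "y \<in> Lam {..<r - 1} v"
    using del_Lam_supp[OF assms(1) xl(2,3)] x(2) unfolding Lam_def by auto
next
  fix y assume y: "y \<in> Lam {..<r - 1} v"
  have yl: "\<forall>K\<subseteq>{..<r-1}. sum y K \<le> sum v {..<card K}" "\<forall>i. i \<notin> {..<r-1} \<longrightarrow> y i = 0" "\<forall>i\<in>{..<r-1}. 0 \<le> y i"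
    using y unfolding Lam_def by auto
  let ?x = "ins j 0 y"
  have "sum ?x J \<le> sum v {..<card J}" if J: "J \<subseteq> {..<r}" for J
  proof -
    have fJ: "finite J" using J finite_subset by blast
    have sub: "uj j -` J \<subseteq> {..<r-1}" by (rule vimage_sub[OF assms(1) J])
    have le: "sum y (uj j -` J) \<le> sum v {..<card (uj j -` J)}" using yl(1) sub by blast
    have ck: "card J \<le> r" using card_mono[OF _ J] by simp
    have c2: "card (uj j -` J) \<le> card J" using S1(2)[OF fJ, where j=j] by simp
    have "sum v {..<card (uj j -` J)} \<le> sum v {..<card J}"
      by (rule sum_mono2) (use c2 ck assms(2) in \<open>auto simp: good_def\<close>)
    then show ?thesis using S1(1)[OF fJ, where x="?x" and j=j] le by (simp add: del_ins ins_j)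
  qed
  then have "?x \<in> Lam {..<r} v" using ins_supp[OF assms(1) yl(2,3)] unfolding Lam_def by auto
  then show "y \<in> del_coord j ` Lam {..<r} v"
    using del_ins[of j 0 y] by (intro image_eqI[of y "del_coord j" ?x]) simp_all
qed

lemma lborel_vimage_mult:
  fixes q :: real
  assumes q: "q > 0" and A: "A \<in> sets borel"
  shows "emeasure lborel ((\<lambda>x. q * x) -` A) = ennreal (1 / q) * emeasure lborel A"
proof -
  have "emeasure (distr lborel borel ((*) q)) A = emeasure lborel ((*) q -` A \<inter> space lborel)"
    by (rule emeasure_distr) (use A in auto)
  moreover have "distr lborel borel ((*) q) = density lborel (\<lambda>_. inverse \<bar>q\<bar>)"
    using q by (intro lborel_distr_mult) simp
  moreover have "emeasure (density lborel (\<lambda>_. inverse \<bar>q\<bar>)) A = inverse \<bar>q\<bar> * emeasure lborel A"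
    by (rule emeasure_density_const) (use A in simp)
  ultimately show ?thesis using q by (simp add: inverse_eq_divide)
qed

lemma PiM_scale:
  fixes A :: "(nat \<Rightarrow> real) set" and q :: real
  assumes fI: "finite I" and q: "q > 0" and A: "A \<subseteq> space (Pi\<^sub>M I (\<lambda>_. lborel))"
  shows "measure (Pi\<^sub>M I (\<lambda>_. lborel)) ((\<lambda>f. \<lambda>i\<in>I. q * f i) ` A)
       = q ^ card I * measure (Pi\<^sub>M I (\<lambda>_. lborel)) A"
proof -
  interpret product_sigma_finite "\<lambda>_::nat. lborel :: real measure" by standard
  define M where "M = Pi\<^sub>M I (\<lambda>_::nat. lborel :: real measure)"
  define T where "T = (\<lambda>f::nat\<Rightarrow>real. \<lambda>i\<in>I. q * f i)"
  define Ti where "Ti = (\<lambda>f::nat\<Rightarrow>real. \<lambda>i\<in>I. f i / q)"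
  have spM: "space M = {f. \<forall>i. i \<notin> I \<longrightarrow> f i = undefined}"
    unfolding M_def by (auto simp: space_PiM PiE_def extensional_def)
  have Tm: "T \<in> M \<rightarrow>\<^sub>M M" unfolding T_def M_def by measurable
  have Tim: "Ti \<in> M \<rightarrow>\<^sub>M M" unfolding Ti_def M_def by measurable
  have eq: "density (distr M M T) (\<lambda>_. ennreal (q ^ card I)) = M"
    unfolding M_def
  proof (rule PiM_eqI[OF fI])
    show "sets (density (distr (Pi\<^sub>M I (\<lambda>_. lborel)) (Pi\<^sub>M I (\<lambda>_. lborel)) T) (\<lambda>_. ennreal (q ^ card I))) = sets (Pi\<^sub>M I (\<lambda>_. lborel))"
      by simp
    fix B :: "nat \<Rightarrow> real set" assume B: "\<And>i. i \<in> I \<Longrightarrow> B i \<in> sets lborel"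
    have box: "Pi\<^sub>E I B \<in> sets (Pi\<^sub>M I (\<lambda>_. lborel))" using B by (simp add: sets_PiM_I_finite fI)
    have pre: "T -` Pi\<^sub>E I B \<inter> space M = Pi\<^sub>E I (\<lambda>i. (\<lambda>x. q * x) -` B i)"
      unfolding spM T_def by (auto simp: PiE_def extensional_def Pi_def)
    have pre_sets: "\<And>i. i \<in> I \<Longrightarrow> (\<lambda>x. q * x) -` B i \<in> sets lborel"
    proof -
      fix i assume "i \<in> I"
      have m: "(\<lambda>x::real. q * x) \<in> borel_measurable borel" by simp
      show "(\<lambda>x. q * x) -` B i \<in> sets lborel"
        using measurable_sets_borel[OF m B[OF \<open>i \<in> I\<close>, simplified]] by simp
    qed
    have "emeasure (density (distr M M T) (\<lambda>_. ennreal (q ^ card I))) (Pi\<^sub>E I B)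
        = ennreal (q ^ card I) * emeasure (distr M M T) (Pi\<^sub>E I B)"
      by (rule emeasure_density_const) (use box in \<open>simp add: M_def\<close>)
    also have "emeasure (distr M M T) (Pi\<^sub>E I B) = emeasure M (T -` Pi\<^sub>E I B \<inter> space M)"
      by (rule emeasure_distr[OF Tm]) (use box in \<open>simp add: M_def\<close>)
    also have "\<dots> = emeasure M (Pi\<^sub>E I (\<lambda>i. (\<lambda>x. q * x) -` B i))"
      by (simp only: pre)
    also have "\<dots> = (\<Prod>i\<in>I. emeasure lborel ((\<lambda>x. q * x) -` B i))"
      unfolding M_def by (rule emeasure_PiM[OF fI pre_sets])
    also have "\<dots> = (\<Prod>i\<in>I. ennreal (1 / q) * emeasure lborel (B i))"
      using B q by (intro prod.cong refl lborel_vimage_mult) auto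
    also have "\<dots> = ennreal (1 / q) ^ card I * (\<Prod>i\<in>I. emeasure lborel (B i))"
      by (simp add: prod.distrib)
    also have "ennreal (q ^ card I) * (ennreal (1 / q) ^ card I * (\<Prod>i\<in>I. emeasure lborel (B i)))
        = (\<Prod>i\<in>I. emeasure lborel (B i))"
    proof -
      have "ennreal (q ^ card I) * ennreal (1 / q) ^ card I = ennreal (q ^ card I * (1 / q) ^ card I)"
        using q by (simp add: ennreal_power ennreal_mult)
      also have "q ^ card I * (1 / q) ^ card I = 1" using q by (simp add: power_one_over)
      finally show ?thesis by (simp add: mult.assoc[symmetric])
    qed
    finally show "emeasure (density (distr (Pi\<^sub>M I (\<lambda>_. lborel)) (Pi\<^sub>M I (\<lambda>_. lborel)) T) (\<lambda>_. ennreal (q ^ card I))) (Pi\<^sub>E I B)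
        = (\<Prod>i\<in>I. emeasure lborel (B i))" unfolding M_def .
  qed
  have key: "emeasure M B = ennreal (q ^ card I) * emeasure M (T -` B \<inter> space M)" if B: "B \<in> sets M" for B
  proof -
    have "emeasure M B = emeasure (density (distr M M T) (\<lambda>_. ennreal (q ^ card I))) B"
      using eq by simp
    also have "\<dots> = ennreal (q ^ card I) * emeasure (distr M M T) B"
      by (rule emeasure_density_const) (use B in simp)
    also have "emeasure (distr M M T) B = emeasure M (T -` B \<inter> space M)"
      by (rule emeasure_distr[OF Tm B])
    finally show ?thesis .
  qed
  have AM: "A \<subseteq> space M" using A unfolding M_def .
  have bk: "T -` (T ` A) \<inter> space M = A"
  proof (intro equalityI subsetI)
    fix g assume "g \<in> T -` (T ` A) \<inter> space M"
    then obtain f where f: "f \<in> A" "T g = T f" "g \<in> space M" by auto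
    have "g i = f i" for i
    proof (cases "i \<in> I")
      case True
      then have "q * g i = q * f i" using fun_cong[OF f(2), of i] unfolding T_def by simp
      then show ?thesis using q by simp
    next
      case False
      then show ?thesis using f(1,3) AM unfolding spM by auto
    qed
    then show "g \<in> A" using f(1) by (metis ext)
  qed (use AM in auto)
  show ?thesis
  proof (cases "A \<in> sets M")
    case True
    have "T ` A = Ti -` A \<inter> space M"
    proof (intro equalityI subsetI)
      fix g assume "g \<in> T ` A"
      then obtain f where f: "f \<in> A" "g = T f" by auto
      have "Ti g = f" using f AM q unfolding spM T_def Ti_def by (auto simp: fun_eq_iff)
      moreover have "g \<in> space M" unfolding spM f(2) T_def by simp
      ultimately show "g \<in> Ti -` A \<inter> space M" using f by simp
    next
      fix g assume g: "g \<in> Ti -` A \<inter> space M"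
      have "g = T (Ti g)" using g q unfolding spM T_def Ti_def by (auto simp: fun_eq_iff)
      then show "g \<in> T ` A" using g by blast
    qed
    then have TA: "T ` A \<in> sets M" using measurable_sets[OF Tim True] by simp
    have "emeasure M (T ` A) = ennreal (q ^ card I) * emeasure M A"
      using key[OF TA] bk by simp
    then have "measure M (T ` A) = q ^ card I * measure M A"
      unfolding measure_def using q by (simp add: enn2real_mult)
    then show ?thesis unfolding M_def T_def .
  next
    case False
    have "T ` A \<notin> sets M"
    proof
      assume "T ` A \<in> sets M"
      then have "T -` (T ` A) \<inter> space M \<in> sets M" using measurable_sets[OF Tm] by blast
      then show False using bk False by simp
    qed
    then have "measure M (T ` A) = 0" by (rule measure_notin_sets)
    moreover have "measure M A = 0" using False by (rule measure_notin_sets)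
    ultimately show ?thesis unfolding M_def T_def by simp
  qed
qed

lemma sum_rev: "(k::nat) \<le> n \<Longrightarrow> sum (\<beta>::nat\<Rightarrow>real) {n - k..<n} = sum (\<lambda>i. \<beta> (n - 1 - i)) {..<k}"
proof (induction k)
  case 0 then show ?case by simp
next
  case (Suc k)
  have eq: "{n - Suc k..<n} = insert (n - Suc k) {n - k..<n}" using Suc.prems by auto
  have "n - Suc k \<notin> {n - k..<n}" using Suc.prems by auto
  then have "sum \<beta> {n - Suc k..<n} = \<beta> (n - Suc k) + sum \<beta> {n - k..<n}" unfolding eq by simp
  also have "\<dots> = \<beta> (n - 1 - k) + sum (\<lambda>i. \<beta> (n - 1 - i)) {..<k}" using Suc by simp
  finally show ?case by simp
qed

lemma SIM_Lam: "SIM n \<beta> = Lam {..<n} (\<lambda>i. \<beta> (n - 1 - i))"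
proof -
  have "(\<Sum>j\<in>{n - card J..<n}. \<beta> j) = sum (\<lambda>i. \<beta> (n - 1 - i)) {..<card J}" if "J \<subseteq> {..<n}" for J
    using sum_rev card_mono[OF _ that] by simp
  then show ?thesis unfolding SIM_def Lam_def orthant_def by (auto simp: not_less)
qed

lemma Lam_cong: "finite I \<Longrightarrow> (\<And>i. i < card I \<Longrightarrow> v i = w i) \<Longrightarrow> Lam I v = Lam I w"
proof -
  assume fI: "finite I" and e: "\<And>i. i < card I \<Longrightarrow> v i = w i"
  have "sum v {..<card J} = sum w {..<card J}" if "J \<subseteq> I" for J
    using card_mono[OF fI that] e by (intro sum.cong) auto
  then show ?thesis unfolding Lam_def by auto
qed

lemma rev_bij: "bij_betw (\<lambda>i. r - 1 - i) {..<r} {..<(r::nat)}"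
  by (rule bij_betw_byWitness[where f'="\<lambda>i. r - 1 - i"]) auto

lemma coord_perms_Perm: "coord_perms r \<alpha> = Perm {..<r} (\<lambda>i. \<alpha> (r - 1 - i))"
proof (intro equalityI subsetI)
  fix p assume "p \<in> coord_perms r \<alpha>"
  then obtain \<sigma> where s: "\<sigma> permutes {..<r}" "p = (\<lambda>i. if i < r then \<alpha> (\<sigma> i) else 0)"
    unfolding coord_perms_def by blast
  let ?\<tau> = "\<lambda>i. r - 1 - \<sigma> i"
  have "bij_betw ((\<lambda>i. r - 1 - i) \<circ> \<sigma>) {..<r} {..<r}"
    using bij_betw_trans[OF permutes_imp_bij[OF s(1)] rev_bij] .
  then have b: "bij_betw ?\<tau> {..<r} {..<card {..<r}}" by (simp add: o_def)
  have peq: "p = (\<lambda>i. if i \<in> {..<r} then \<alpha> (r - 1 - ?\<tau> i) else 0)"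
  proof
    fix i show "p i = (if i \<in> {..<r} then \<alpha> (r - 1 - ?\<tau> i) else 0)"
    proof (cases "i < r")
      case True
      then have "\<sigma> i < r" using permutes_in_image[OF s(1)] by simp
      then show ?thesis using True s(2) by (simp add: Suc_diff_Suc)
    qed (simp add: s(2))
  qed
  show "p \<in> Perm {..<r} (\<lambda>i. \<alpha> (r - 1 - i))" unfolding Perm_def mem_Collect_eq
    using peq b by (intro exI[of _ ?\<tau>]) simp
next
  fix p assume "p \<in> Perm {..<r} (\<lambda>i. \<alpha> (r - 1 - i))"
  then obtain \<tau> where t: "bij_betw \<tau> {..<r} {..<r}" "p = (\<lambda>i. if i \<in> {..<r} then \<alpha> (r - 1 - \<tau> i) else 0)"
    unfolding Perm_def by auto
  define \<sigma> where "\<sigma> i = (if i < r then r - 1 - \<tau> i else i)" for i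
  have "bij_betw ((\<lambda>i. r - 1 - i) \<circ> \<tau>) {..<r} {..<r}" using bij_betw_trans[OF t(1) rev_bij] .
  then have "bij_betw \<sigma> {..<r} {..<r}" by (rule bij_betw_cong[THEN iffD1, rotated]) (auto simp: \<sigma>_def)
  then have sp: "\<sigma> permutes {..<r}" by (rule bij_imp_permutes) (simp add: \<sigma>_def)
  have peq: "p = (\<lambda>i. if i < r then \<alpha> (\<sigma> i) else 0)" unfolding t(2) \<sigma>_def by auto
  show "p \<in> coord_perms r \<alpha>" unfolding coord_perms_def mem_Collect_eq
    using peq sp by (intro exI[of _ \<sigma>]) simp
qed

lemma good_v:
  assumes "0 < \<alpha> 0" "\<And>i j. i \<le> j \<Longrightarrow> j < r \<Longrightarrow> \<alpha> i \<le> \<alpha> j"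
  shows "good r (\<lambda>i. \<alpha> (r - 1 - i))"
  unfolding good_def
proof safe
  fix i j assume "i \<le> j" "j < r"
  then show "\<alpha> (r - 1 - j) \<le> \<alpha> (r - 1 - i)" using assms(2) by simp
next
  fix i assume "i < r"
  then show "0 \<le> \<alpha> (r - 1 - i)" using assms(1) assms(2)[of 0 "r - 1 - i"] by simp
qed

lemma axis_Lam:
  assumes "j < r" "good r v"
  shows "(\<lambda>x. x j) ` Lam {..<r} v = {0..v 0}"
proof (intro equalityI subsetI)
  fix t assume "t \<in> (\<lambda>x. x j) ` Lam {..<r} v"
  then obtain x where x: "x \<in> Lam {..<r} v" "t = x j" by blast
  have "sum x {j} \<le> sum v {..<card {j}}" using x(1) assms(1) unfolding Lam_def by blast
  then show "t \<in> {0..v 0}" using x assms(1) unfolding Lam_def by auto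
next
  fix t assume t: "t \<in> {0..v 0}"
  let ?x = "\<lambda>i. if i = j then t else 0"
  have "sum ?x J \<le> sum v {..<card J}" if J: "J \<subseteq> {..<r}" for J
  proof -
    have fJ: "finite J" using J finite_subset by blast
    have nn: "0 \<le> sum v {..<card J}" using card_mono[OF _ J] assms(2) by (intro sum_nonneg) (auto simp: good_def)
    show ?thesis
    proof (cases "j \<in> J")
      case True
      then have "card J > 0" using fJ card_gt_0_iff by blast
      then have "sum v {..<card J} = v 0 + sum v ({..<card J} - {0})"
        by (simp add: sum.remove[of _ 0])
      moreover have "0 \<le> sum v ({..<card J} - {0})" using card_mono[OF _ J] assms(2)
        by (intro sum_nonneg) (auto simp: good_def)
      ultimately show ?thesis using True fJ t by (simp add: sum.delta)
    next
      case False
      then show ?thesis using fJ nn by (simp add: sum.delta)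
    qed
  qed
  then have "?x \<in> Lam {..<r} v" unfolding Lam_def using t assms(1) by auto
  then show "t \<in> (\<lambda>x. x j) ` Lam {..<r} v"
    by (intro image_eqI[of t "\<lambda>x. x j" ?x]) simp_all
qed

definition sc :: "real \<Rightarrow> (nat \<Rightarrow> real) \<Rightarrow> nat \<Rightarrow> real" where "sc q x = (\<lambda>i. q * x i)"

lemma SIM_scale:
  assumes "q > 0"
  shows "SIM r (\<lambda>i. q * \<alpha> i) = sc q ` SIM r \<alpha>"
proof (intro equalityI subsetI)
  fix x assume x: "x \<in> SIM r (\<lambda>i. q * \<alpha> i)"
  let ?y = "\<lambda>i. x i / q"
  have "?y \<in> SIM r \<alpha>"
    using x assms unfolding SIM_def orthant_def
    by (auto simp: sum_divide_distrib[symmetric] divide_le_eq sum_distrib_left[symmetric] mult.commute)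
  moreover have "x = sc q ?y" using assms by (simp add: sc_def)
  ultimately show "x \<in> sc q ` SIM r \<alpha>" by blast
next
  fix x assume "x \<in> sc q ` SIM r \<alpha>"
  then obtain y where y: "y \<in> SIM r \<alpha>" "x = sc q y" by blast
  then show "x \<in> SIM r (\<lambda>i. q * \<alpha> i)"
    using assms unfolding SIM_def orthant_def sc_def
    by (auto simp: sum_distrib_left[symmetric])
qed

lemma vol_scale:
  assumes "q > 0"
  shows "vol n (sc q ` A) = q ^ n * vol n A"
proof -
  have "(\<lambda>x. restrict x {..<n}) ` (sc q ` A) = (\<lambda>x. restrict (sc q x) {..<n}) ` A"
    by (rule image_image)
  also have "\<dots> = (\<lambda>x. (\<lambda>f. \<lambda>i\<in>{..<n}. q * f i) (restrict x {..<n})) ` A"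
    by (rule image_cong) (auto simp: sc_def restrict_def fun_eq_iff)
  also have "\<dots> = (\<lambda>f. \<lambda>i\<in>{..<n}. q * f i) ` ((\<lambda>x. restrict x {..<n}) ` A)"
    by (rule image_image[symmetric])
  finally have "(\<lambda>x. restrict x {..<n}) ` (sc q ` A) = (\<lambda>f. \<lambda>i\<in>{..<n}. q * f i) ` ((\<lambda>x. restrict x {..<n}) ` A)" .
  moreover have "(\<lambda>x. restrict x {..<n}) ` A \<subseteq> space (Pi\<^sub>M {..<n} (\<lambda>_. lborel))"
    by (auto simp: space_PiM PiE_def extensional_def restrict_def split: if_splits)
  ultimately show ?thesis unfolding vol_def using PiM_scale[OF _ assms] by simp
qed

lemma proj_scale: "proj_del j (sc q ` A) = sc q ` proj_del j A"
proof -
  have "del_coord j \<circ> sc q = sc q \<circ> del_coord j" by (auto simp: del_coord_def sc_def fun_eq_iff)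
  have "del_coord j ` sc q ` A = (del_coord j \<circ> sc q) ` A" by (rule image_comp)
  also have "\<dots> = (sc q \<circ> del_coord j) ` A" by (simp only: \<open>del_coord j \<circ> sc q = sc q \<circ> del_coord j\<close>)
  also have "\<dots> = sc q ` del_coord j ` A" by (rule image_comp[symmetric])
  finally show ?thesis unfolding proj_del_def .
qed

theorem lemma13:
  fixes r :: nat and \<alpha> :: "nat \<Rightarrow> real"
  assumes "r \<ge> 1"
    and "0 < \<alpha> 0"
    and "\<And>i j. i \<le> j \<Longrightarrow> j < r \<Longrightarrow> \<alpha> i \<le> \<alpha> j"
  shows "(\<forall>j<r. axis_length (SIM r \<alpha>) j = \<alpha> (r - 1))
    \<and> SIM r \<alpha> = down_closure r (convex hull (coord_perms r \<alpha>))
    \<and> (\<forall>j<r. {del_coord j x | x. x \<in> SIM r \<alpha> \<and> x j = \<alpha> (r - 1)} = SIM (r - 1) \<alpha>)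
    \<and> (\<forall>j<r. proj_del j (SIM r \<alpha>) = SIM (r - 1) (\<lambda>i. \<alpha> (Suc i)))
    \<and> (\<forall>q k. 0 < q \<longrightarrow> 0 < k \<longrightarrow>
         delta r (q * k) (SIM r (\<lambda>i. q * \<alpha> i)) = q ^ r * delta r k (SIM r \<alpha>))"
proof (intro conjI allI impI)
  define v where "v = (\<lambda>i. \<alpha> (r - 1 - i))"
  have g: "good r v" unfolding v_def by (rule good_v[where \<alpha>=\<alpha> and r=r, OF assms(2) assms(3)])
  have S: "SIM r \<alpha> = Lam {..<r} v" unfolding v_def by (rule SIM_Lam)
  have v0: "v 0 = \<alpha> (r - 1)" unfolding v_def by simp
  have v0nn: "0 \<le> v 0" using g assms(1) unfolding good_def by auto
  show "axis_length (SIM r \<alpha>) j = \<alpha> (r - 1)" if "j < r" for j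
    unfolding axis_length_def S axis_Lam[OF that g] using v0 v0nn by simp
  show "SIM r \<alpha> = down_closure r (convex hull coord_perms r \<alpha>)"
  proof -
    have o: "orthant r = {x. (\<forall>i. i \<notin> {..<r} \<longrightarrow> x i = 0) \<and> (\<forall>i\<in>{..<r}. 0 \<le> x i)}"
      unfolding orthant_def by (auto simp: not_less)
    have d1: "down_closure r (convex hull coord_perms r \<alpha>) = Dn {..<r} v"
      unfolding down_closure_def Dn_def o coord_perms_Perm v_def
      by (rule set_eqI) (simp only: mem_Collect_eq conj_assoc)
    have d2: "Lam {..<r} v = Dn {..<r} v"
    proof (intro equalityI subsetI)
      fix x assume "x \<in> Lam {..<r} v"
      then show "x \<in> Dn {..<r} v" by (intro Lam_Dn) (use g in simp_all)
    next
      fix x assume "x \<in> Dn {..<r} v"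
      then show "x \<in> Lam {..<r} v" by (intro Dn_Lam) (use g in simp_all)
    qed
    show ?thesis unfolding S by (rule trans[OF d2 sym[OF d1]])
  qed
  show "{del_coord j x | x. x \<in> SIM r \<alpha> \<and> x j = \<alpha> (r - 1)} = SIM (r - 1) \<alpha>" if "j < r" for j
  proof -
    have "SIM (r - 1) \<alpha> = Lam {..<r - 1} (\<lambda>i. v (Suc i))"
    proof -
      have "(\<lambda>i. \<alpha> (r - 1 - 1 - i)) = (\<lambda>i. v (Suc i))" unfolding v_def by (simp add: fun_eq_iff)
      then show ?thesis unfolding SIM_Lam by simp
    qed
    then show ?thesis using part3[OF that g] unfolding S v0 by simp
  qed
  show "proj_del j (SIM r \<alpha>) = SIM (r - 1) (\<lambda>i. \<alpha> (Suc i))" if "j < r" for j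
  proof -
    have "SIM (r - 1) (\<lambda>i. \<alpha> (Suc i)) = Lam {..<r - 1} v"
      unfolding SIM_Lam v_def
    proof (rule Lam_cong)
      fix i assume "i < card {..<r - 1}"
      then have "Suc i < r" by simp
      then show "\<alpha> (Suc (r - 1 - 1 - i)) = \<alpha> (r - 1 - i)" by (simp add: Suc_diff_Suc)
    qed simp
    then show ?thesis using part4[OF that g] unfolding S by simp
  qed
  fix q k :: real assume q: "0 < q" and k: "0 < k"
  have A: "SIM r (\<lambda>i. q * \<alpha> i) = sc q ` SIM r \<alpha>" by (rule SIM_scale[OF q])
  have "delta r (q * k) (SIM r (\<lambda>i. q * \<alpha> i))
      = q ^ r * vol r (SIM r \<alpha>) - q * k * (\<Sum>j<r. q ^ (r - 1) * vol (r - 1) (proj_del j (SIM r \<alpha>)))"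
    unfolding delta_def A proj_scale vol_scale[OF q] ..
  also have "\<dots> = q ^ r * vol r (SIM r \<alpha>) - q ^ r * k * (\<Sum>j<r. vol (r - 1) (proj_del j (SIM r \<alpha>)))"
  proof -
    define W where "W = (\<Sum>j<r. vol (r - 1) (proj_del j (SIM r \<alpha>)))"
    have e: "q * q ^ (r - 1) = q ^ r" using assms(1) by (cases r) auto
    have s: "(\<Sum>j<r. q ^ (r - 1) * vol (r - 1) (proj_del j (SIM r \<alpha>))) = q ^ (r - 1) * W"
      unfolding W_def by (rule sum_distrib_left[symmetric])
    have "q * k * (q ^ (r - 1) * W) = (q * q ^ (r - 1)) * k * W"
      by (simp only: mult.assoc mult.commute mult.left_commute)
    then have "q * k * (q ^ (r - 1) * W) = q ^ r * k * W" unfolding e .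
    then show ?thesis unfolding s W_def by simp
  qed
  also have "\<dots> = q ^ r * delta r k (SIM r \<alpha>)" unfolding delta_def by (simp only: right_diff_distrib mult.assoc)
  finally show "delta r (q * k) (SIM r (\<lambda>i. q * \<alpha> i)) = q ^ r * delta r k (SIM r \<alpha>)" .
qed

end
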